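(* On each of the two charts of $\mathbb OP^{(1,1)}$, with coordinates $(u,v)\in\mathbb O^2$ satisfying $1+|u|^2-|v|^2>0$, the symmetric bilinear form whose quadratic form on tangent vectors $(du,dv)=(\xi,\eta)$ is $$ds^2=\frac{|\xi|^2(1-|v|^2)-|\eta|^2(1+|u|^2)+2\mathrm{Re}\big[(u\bar v)(\eta\bar\xi)\big]}{(1+|u|^2-|v|^2)^2}$$ defines a non-degenerate metric on $\mathbb OP^{(1,1)}$ of signature $(8,8)$.
   Context: Octonions $\mathbb O=\mathbb H\oplus\mathbb H$ with product $(q_1,q_2)(p_1,p_2)=(q_1p_1-\bar p_2q_2,\ p_2q_1+q_2\bar p_1)$, conjugation $\overline{(q_1,q_2)}=(\bar q_1,-q_2)$, $\langle a,b\rangle=\mathrm{Re}(a\bar b)$, $|a|^2=\langle a,a\rangle$ (positive definite). Let $U_1=\{(1,u,v)\in\mathbb O^3:1+|u|^2-|v|^2>0\}$, $U_2=\{(u,1,v)\in\mathbb O^3:|u|^2+1-|v|^2>0\}$, and on $U_1\cup U_2$ let $[a,b,c]\sim[d,e,f]$ iff $(a,b,c)=(d\lambda,e\lambda,f\lambda)$ for some $\lambda\in\mathbb O\setminus\{0\}$. The indefinite octonionic projective plane is $\mathbb OP^{(1,1)}=(U_1\cup U_2)/_\sim$, with charts $[1,u,v]\mapsto(u,v)$ and $[u,1,v]\mapsto(u,v)$. *)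

theory Defs
  imports "HOL-Analysis.Analysis"
begin

text \<open>Quaternions modelled as R^4 = real x real x real x real (coordinates 1,i,j,k),
  with the Hamilton product; octonions as pairs of quaternions (Cayley-Dickson) with the
  product from the paper.\<close>

type_synonym quat = "real \<times> real \<times> real \<times> real"
type_synonym oct = "quat \<times> quat"

definition qmult :: "quat \<Rightarrow> quat \<Rightarrow> quat" where
  "qmult a b = (case a of (a0,a1,a2,a3) \<Rightarrow> case b of (b0,b1,b2,b3) \<Rightarrow>
     (a0*b0 - a1*b1 - a2*b2 - a3*b3,
      a0*b1 + a1*b0 + a2*b3 - a3*b2,
      a0*b2 - a1*b3 + a2*b0 + a3*b1,
      a0*b3 + a1*b2 - a2*b1 + a3*b0))"

definition qconj :: "quat \<Rightarrow> quat" where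
  "qconj a = (case a of (a0,a1,a2,a3) \<Rightarrow> (a0, -a1, -a2, -a3))"

definition omult :: "oct \<Rightarrow> oct \<Rightarrow> oct" where
  "omult x y = (case x of (q1,q2) \<Rightarrow> case y of (p1,p2) \<Rightarrow>
     (qmult q1 p1 - qmult (qconj p2) q2, qmult p2 q1 + qmult q2 (qconj p1)))"

definition oconj :: "oct \<Rightarrow> oct" where
  "oconj x = (case x of (q1,q2) \<Rightarrow> (qconj q1, - q2))"

definition oRe :: "oct \<Rightarrow> real" where
  "oRe x = fst (fst x)"

definition oinner :: "oct \<Rightarrow> oct \<Rightarrow> real" where
  "oinner a b = oRe (omult a (oconj b))"

definition onorm2 :: "oct \<Rightarrow> real" where
  "onorm2 a = oinner a a"

definition oinv :: "oct \<Rightarrow> oct" where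
  "oinv a = scaleR (1 / onorm2 a) (oconj a)"

definition chart_dom :: "(oct \<times> oct) set" where
  "chart_dom = {(u,v). 1 + onorm2 u - onorm2 v > 0}"

definition ds2 :: "oct \<times> oct \<Rightarrow> oct \<times> oct \<Rightarrow> real" where
  "ds2 p w = (case p of (u,v) \<Rightarrow> case w of (\<xi>,\<eta>) \<Rightarrow>
     (onorm2 \<xi> * (1 - onorm2 v) - onorm2 \<eta> * (1 + onorm2 u)
      + 2 * oRe (omult (omult u (oconj v)) (omult \<eta> (oconj \<xi>))))
     / (1 + onorm2 u - onorm2 v)^2)"

definition metric_form :: "oct \<times> oct \<Rightarrow> oct \<times> oct \<Rightarrow> oct \<times> oct \<Rightarrow> real" where
  "metric_form p x y = (ds2 p (x + y) - ds2 p (x - y)) / 4"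

text \<open>Transition map between the two charts: [1,u,v] = [u^{-1},1,v u^{-1}] (scaling by
  lambda = u), and symmetrically [u,1,v] = [1,u^{-1},v u^{-1}]; defined where u is nonzero.\<close>
definition transition :: "oct \<times> oct \<Rightarrow> oct \<times> oct" where
  "transition p = (case p of (u,v) \<Rightarrow> (oinv u, omult v (oinv u)))"

definition nondegenerate :: "('a::real_vector \<Rightarrow> 'a \<Rightarrow> real) \<Rightarrow> bool" where
  "nondegenerate B \<longleftrightarrow> (\<forall>x. (\<forall>y. B x y = 0) \<longrightarrow> x = 0)"

definition pos_index :: "('a::euclidean_space \<Rightarrow> 'a \<Rightarrow> real) \<Rightarrow> nat" where
  "pos_index B = Max {d. \<exists>S. subspace S \<and> dim S = d \<and> (\<forall>x\<in>S. x \<noteq> 0 \<longrightarrow> B x x > 0)}"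

definition neg_index :: "('a::euclidean_space \<Rightarrow> 'a \<Rightarrow> real) \<Rightarrow> nat" where
  "neg_index B = Max {d. \<exists>S. subspace S \<and> dim S = d \<and> (\<forall>x\<in>S. x \<noteq> 0 \<longrightarrow> B x x < 0)}"

definition has_signature :: "('a::euclidean_space \<Rightarrow> 'a \<Rightarrow> real) \<Rightarrow> nat \<Rightarrow> nat \<Rightarrow> bool" where
  "has_signature B p q \<longleftrightarrow> pos_index B = p \<and> neg_index B = q"

end

theory Submission imports Defs begin

lemma oct_cases: fixes x :: oct obtains a0 a1 a2 a3 a4 a5 a6 a7 where "x = ((a0,a1,a2,a3),(a4,a5,a6,a7))"
  by (metis prod.collapse)
lemmas odefs = omult_def qmult_def qconj_def oRe_def onorm2_def oinner_def oconj_def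


lemma oinner_eq: "oinner x y = x \<bullet> y"
  apply (cases x rule: oct_cases; cases y rule: oct_cases)
  by (simp add: odefs inner_prod_def algebra_simps)
lemma onorm2_eq: "onorm2 x = x \<bullet> x" by (simp add: onorm2_def oinner_eq)
lemma oRe_conj: "oRe (omult a (oconj b)) = a \<bullet> b" using oinner_eq oinner_def by metis

lemma omult_add1: "omult (x + y) z = omult x z + omult y z"
  apply (cases x rule: oct_cases; cases y rule: oct_cases; cases z rule: oct_cases)
  by (simp add: odefs algebra_simps)
lemma omult_add2: "omult z (x + y) = omult z x + omult z y"
  apply (cases x rule: oct_cases; cases y rule: oct_cases; cases z rule: oct_cases)
  by (simp add: odefs algebra_simps)
lemma omult_scale1: "omult (c *\<^sub>R x) z = c *\<^sub>R omult x z"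
  apply (cases x rule: oct_cases; cases z rule: oct_cases)
  by (simp add: odefs algebra_simps)
lemma omult_scale2: "omult z (c *\<^sub>R x) = c *\<^sub>R omult z x"
  apply (cases x rule: oct_cases; cases z rule: oct_cases)
  by (simp add: odefs algebra_simps)
lemma bilinear_omult: "bilinear omult"
  unfolding bilinear_def
  by (intro allI conjI linearI; simp only: omult_add1 omult_add2 omult_scale1 omult_scale2)
lemma bb_omult: "bounded_bilinear omult"
  using bilinear_omult bilinear_conv_bounded_bilinear by blast
lemma omult_minus1: "omult (x - y) z = omult x z - omult y z"
  using bounded_bilinear.diff_left[OF bb_omult] by blast
lemma omult_minus2: "omult z (x - y) = omult z x - omult z y"
  using bounded_bilinear.diff_right[OF bb_omult] by blast
lemma omult_uminus1: "omult (- x) z = - omult x z"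
  using bounded_bilinear.minus_left[OF bb_omult] by blast
lemma omult_uminus2: "omult z (- x) = - omult z x"
  using bounded_bilinear.minus_right[OF bb_omult] by blast
lemma omult_zero1: "omult 0 z = 0" using bounded_bilinear.zero_left[OF bb_omult] by blast
lemma omult_zero2: "omult z 0 = 0" using bounded_bilinear.zero_right[OF bb_omult] by blast

lemma linear_oconj: "linear oconj"
  apply (rule linearI)
  subgoal for x y by (cases x rule: oct_cases; cases y rule: oct_cases) (simp add: odefs)
  subgoal for c x by (cases x rule: oct_cases) (simp add: odefs)
  done
lemma oconj_add: "oconj (x + y) = oconj x + oconj y" using linear_oconj by (simp add: linear_add)
lemma oconj_scale: "oconj (c *\<^sub>R x) = c *\<^sub>R oconj x" using linear_oconj by (simp add: linear_scale)
lemma oconj_conj[simp]: "oconj (oconj x) = x" by (cases x rule: oct_cases) (simp add: odefs)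
lemma oconj_inner[simp]: "oconj x \<bullet> oconj y = x \<bullet> y"
  by (cases x rule: oct_cases; cases y rule: oct_cases) (simp add: odefs inner_prod_def)
lemma oconj_mult: "oconj (omult x y) = omult (oconj y) (oconj x)"
  apply (cases x rule: oct_cases; cases y rule: oct_cases)
  by (simp add: odefs algebra_simps)

lemma re_assoc: "oRe (omult (omult x y) z) = oRe (omult x (omult y z))"
  apply (cases x rule: oct_cases; cases y rule: oct_cases; cases z rule: oct_cases)
  apply (simp add: odefs)
  apply (thin_tac "_ = _")+
  by algebra
lemma adjL: "omult x y \<bullet> z = y \<bullet> omult (oconj x) z"
  apply (cases x rule: oct_cases; cases y rule: oct_cases; cases z rule: oct_cases)
  apply (simp add: odefs inner_prod_def)
  apply (thin_tac "_ = _")+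
  by algebra
lemma adjR: "omult x y \<bullet> z = x \<bullet> omult z (oconj y)"
  apply (cases x rule: oct_cases; cases y rule: oct_cases; cases z rule: oct_cases)
  apply (simp add: odefs inner_prod_def)
  apply (thin_tac "_ = _")+
  by algebra
lemma altL: "omult x (omult (oconj x) y) = (x \<bullet> x) *\<^sub>R y"
  apply (cases x rule: oct_cases; cases y rule: oct_cases)
  apply (simp add: odefs inner_prod_def)
  apply (thin_tac "_ = _")+
  apply safe
  by algebra+
lemma altR: "omult (omult y (oconj x)) x = (x \<bullet> x) *\<^sub>R y"
  apply (cases x rule: oct_cases; cases y rule: oct_cases)
  apply (simp add: odefs inner_prod_def)
  apply (thin_tac "_ = _")+
  apply safe
  by algebra+
lemma flex: "omult x (omult y x) = omult (omult x y) x"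
  apply (cases x rule: oct_cases; cases y rule: oct_cases)
  apply (simp add: odefs)
  apply (thin_tac "_ = _")+
  apply safe
  by algebra+
lemma norm_mult: "omult x y \<bullet> omult x y = (x \<bullet> x) * (y \<bullet> y)"
  apply (cases x rule: oct_cases; cases y rule: oct_cases)
  apply (simp add: odefs inner_prod_def)
  apply (thin_tac "_ = _")+
  by algebra
lemma moufang: "omult (omult x y) (omult z x) = omult (omult x (omult y z)) x"
  apply (cases x rule: oct_cases; cases y rule: oct_cases; cases z rule: oct_cases)
  apply (simp add: odefs)
  apply (thin_tac "_ = _")+
  apply safe
  by algebra+
lemma sandwich: "omult (omult (oconj u) h) (oconj u) = (2 * (u \<bullet> h)) *\<^sub>R oconj u - (u \<bullet> u) *\<^sub>R oconj h"
  apply (cases u rule: oct_cases; cases h rule: oct_cases)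
  apply (simp add: odefs inner_prod_def)
  apply (thin_tac "_ = _")+
  apply safe
  by algebra+
lemma DIM_oct: "DIM(oct) = 8" by simp
lemma DIM_oct2: "DIM(oct \<times> oct) = 16" by simp


definition Bf :: "oct \<Rightarrow> oct \<Rightarrow> oct\<times>oct \<Rightarrow> oct\<times>oct \<Rightarrow> real" where
 "Bf u v x y = ((1 - v\<bullet>v) * (fst x \<bullet> fst y) - (1 + u\<bullet>u) * (snd x \<bullet> snd y)
     + omult (omult u (oconj v)) (snd x) \<bullet> fst y + omult (omult u (oconj v)) (snd y) \<bullet> fst x)
     / (1 + u\<bullet>u - v\<bullet>v)^2"

lemma ds2_eq: "ds2 (u,v) (\<xi>,\<eta>) = ((1 - v\<bullet>v) * (\<xi>\<bullet>\<xi>) - (1 + u\<bullet>u) * (\<eta>\<bullet>\<eta>)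
     + 2 * (omult (omult u (oconj v)) \<eta> \<bullet> \<xi>)) / (1 + u\<bullet>u - v\<bullet>v)^2"
proof -
  have "oRe (omult (omult u (oconj v)) (omult \<eta> (oconj \<xi>))) = omult (omult u (oconj v)) \<eta> \<bullet> \<xi>"
    by (metis re_assoc oRe_conj)
  then show ?thesis by (simp add: ds2_def onorm2_eq algebra_simps)
qed

lemma ds2_eq': "ds2 (u,v) w = ((1 - v\<bullet>v) * (fst w\<bullet>fst w) - (1 + u\<bullet>u) * (snd w\<bullet>snd w)
     + 2 * (omult (omult u (oconj v)) (snd w) \<bullet> fst w)) / (1 + u\<bullet>u - v\<bullet>v)^2"
  using ds2_eq[of u v "fst w" "snd w"] by simp

lemma ds2_Bf: "ds2 (u,v) w = Bf u v w w"
  by (cases w) (simp add: ds2_eq Bf_def inner_commute)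

lemma mf_Bf: "metric_form (u,v) x y = Bf u v x y"
  apply (simp add: metric_form_def ds2_eq' Bf_def inner_add_left inner_add_right inner_diff_left inner_diff_right
     omult_add2 omult_minus2)
  apply (simp add: divide_simps inner_commute)
  apply (simp add: algebra_simps)
  done

lemma bilinear_Bf: "bilinear (Bf u v)"
  unfolding bilinear_def
  apply (intro allI conjI linearI)
  apply (simp_all add: Bf_def inner_add_left inner_add_right omult_add2 omult_scale2 add_divide_distrib
       inner_scaleR_left inner_scaleR_right)
  apply (simp_all add: divide_simps algebra_simps)
  done



lemma index_max:
  fixes R :: "'a::euclidean_space \<Rightarrow> bool"
  assumes P: "subspace P" "dim P = k" "\<forall>x\<in>P. x \<noteq> 0 \<longrightarrow> R x"
    and T: "subspace T" "\<forall>x\<in>T. \<not> R x" "dim T + k = DIM('a)"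
  shows "Max {d. \<exists>S. subspace S \<and> dim S = d \<and> (\<forall>x\<in>S. x \<noteq> 0 \<longrightarrow> R x)} = k"
proof (rule Max_eqI)
  have "d \<le> k" if "d \<in> {d. \<exists>S. subspace S \<and> dim S = d \<and> (\<forall>x\<in>S. x \<noteq> 0 \<longrightarrow> R x)}" for d
  proof -
    from that obtain S where S: "subspace S" "dim S = d" "\<forall>x\<in>S. x \<noteq> 0 \<longrightarrow> R x" by auto
    have "S \<inter> T = {0}" using S T subspace_0 by fastforce
    then have "dim (S \<inter> T) = 0" by simp
    moreover have "dim {x + y |x y. x \<in> S \<and> y \<in> T} + dim(S \<inter> T) = dim S + dim T"
      by (rule dim_sums_Int[OF S(1) T(1)])
    moreover have "dim {x + y |x y. x \<in> S \<and> y \<in> T} \<le> DIM('a)" by (rule dim_subset_UNIV)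
    ultimately show ?thesis using S(2) T(3) by linarith
  qed
  then show "finite {d. \<exists>S. subspace S \<and> dim S = d \<and> (\<forall>x\<in>S. x \<noteq> 0 \<longrightarrow> R x)}"
    by (meson finite_atMost finite_subset atMost_iff subsetI)
  show "\<And>y. y \<in> {d. \<exists>S. subspace S \<and> dim S = d \<and> (\<forall>x\<in>S. x \<noteq> 0 \<longrightarrow> R x)} \<Longrightarrow> y \<le> k"
    by fact
  show "k \<in> {d. \<exists>S. subspace S \<and> dim S = d \<and> (\<forall>x\<in>S. x \<noteq> 0 \<longrightarrow> R x)}" using P by auto
qed

lemma dim_range_inj:
  fixes f :: "'a::euclidean_space \<Rightarrow> 'b::euclidean_space"
  assumes "linear f" "inj f"
  shows "dim (range f) = DIM('a)"
  using dim_image_eq[OF assms(1), of UNIV] assms(2) by (simp add: inj_on_def)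

lemma nondeg_Bf:
  assumes D: "1 + u\<bullet>u - v\<bullet>v > 0"
  shows "nondegenerate (Bf u v)"
  unfolding nondegenerate_def
proof (intro allI impI)
  fix x :: "oct \<times> oct"
  assume h: "\<forall>y. Bf u v x y = 0"
  define a where "a = omult u (oconj v)"
  define \<xi> where "\<xi> = fst x"
  define \<eta> where "\<eta> = snd x"
  define z1 where "z1 = (1 - v\<bullet>v) *\<^sub>R \<xi> + omult a \<eta>"
  define z2 where "z2 = (1 + u\<bullet>u) *\<^sub>R \<eta> - omult (oconj a) \<xi>"
  have Dn: "(1 + u\<bullet>u - v\<bullet>v)^2 \<noteq> 0" using D by simp
  have "Bf u v x (z1, 0) = (z1 \<bullet> z1) / (1 + u\<bullet>u - v\<bullet>v)^2"
    by (simp add: Bf_def a_def[symmetric] \<xi>_def[symmetric] \<eta>_def[symmetric] omult_zero2 z1_def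
         inner_add_left inner_add_right algebra_simps inner_commute)
  moreover have "Bf u v x (z1, 0) = 0" using h by blast
  ultimately have "z1 \<bullet> z1 = 0" using Dn by (simp add: divide_eq_0_iff)
  then have z1: "z1 = 0" by simp
  have "Bf u v x (0, z2) = (- (1 + u\<bullet>u) * (\<eta> \<bullet> z2) + omult a z2 \<bullet> \<xi>) / (1 + u\<bullet>u - v\<bullet>v)^2"
    by (simp add: Bf_def a_def[symmetric] \<xi>_def[symmetric] \<eta>_def[symmetric] algebra_simps)
  also have "omult a z2 \<bullet> \<xi> = z2 \<bullet> omult (oconj a) \<xi>" by (rule adjL)
  also have "- (1 + u\<bullet>u) * (\<eta> \<bullet> z2) + z2 \<bullet> omult (oconj a) \<xi> = - (z2 \<bullet> z2)"
    by (simp add: z2_def inner_diff_left inner_commute algebra_simps)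
  finally have "Bf u v x (0, z2) = - (z2 \<bullet> z2) / (1 + u\<bullet>u - v\<bullet>v)^2" .
  moreover have "Bf u v x (0, z2) = 0" using h by blast
  ultimately have "z2 \<bullet> z2 = 0" using Dn by (simp add: divide_eq_0_iff)
  then have z2: "z2 = 0" by simp
  have aa: "a \<bullet> a = (u\<bullet>u) * (v\<bullet>v)" by (simp add: a_def norm_mult)
  have "(1 + u\<bullet>u) *\<^sub>R z1 = ((1 - v\<bullet>v) * (1 + u\<bullet>u)) *\<^sub>R \<xi> + omult a ((1 + u\<bullet>u) *\<^sub>R \<eta>)"
    unfolding z1_def omult_scale2 scaleR_add_right by (simp add: mult.commute)
  also have "(1 + u\<bullet>u) *\<^sub>R \<eta> = omult (oconj a) \<xi>" using z2 by (simp add: z2_def)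
  also have "omult a (omult (oconj a) \<xi>) = (a \<bullet> a) *\<^sub>R \<xi>" by (rule altL)
  finally have e: "(1 + u\<bullet>u) *\<^sub>R z1 = ((1 - v\<bullet>v) * (1 + u\<bullet>u)) *\<^sub>R \<xi> + (a \<bullet> a) *\<^sub>R \<xi>" .
  have "((1 - v\<bullet>v) * (1 + u\<bullet>u) + a \<bullet> a) *\<^sub>R \<xi> = 0"
    using e z1 by (metis scaleR_add_left scaleR_zero_right)
  moreover have "(1 - v\<bullet>v) * (1 + u\<bullet>u) + a \<bullet> a = 1 + u\<bullet>u - v\<bullet>v" using aa by (simp add: algebra_simps)
  ultimately have "(1 + u\<bullet>u - v\<bullet>v) *\<^sub>R \<xi> = 0" by simp
  with D have x1: "\<xi> = 0" by simp
  with z2 have "(1 + u\<bullet>u) *\<^sub>R \<eta> = 0" by (simp add: z2_def omult_zero2)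
  moreover have "1 + u\<bullet>u > 0" by (simp add: add_pos_nonneg)
  ultimately have "\<eta> = 0" by simp
  with x1 show "x = 0" by (simp add: \<xi>_def \<eta>_def prod_eq_iff)
qed



lemma real_aux1:
  fixes N C X k :: real
  assumes "1 + N > 0" "1 + N - C > 0" "k = 1 / (1 + N)"
  shows "((1 - C) * X - (1 + N) * (k*k*(N*C) * X) + 2 * (k * (N*C) * X)) / (1 + N - C)^2
        = X * k / (1 + N - C)"
proof -
  have k1: "(1 + N) * k = 1" using assms by simp
  have "(1 - C) * X - (1 + N) * (k*k*(N*C) * X) + 2 * (k * (N*C) * X)
        = X * ((1 - C) - ((1 + N) * k) * k * (N*C) + 2 * k * (N*C))" by (simp add: algebra_simps)
  also have "\<dots> = X * ((1 - C) + k * (N*C))" using k1 by simp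
  also have "(1 - C) + k * (N*C) = k * (1 + N - C)"
  proof -
    have "k * (1 + N - C) = (1 + N) * k - k * C" by (simp add: algebra_simps)
    also have "\<dots> = 1 - k * C" using k1 by simp
    finally have "k * (1 + N - C) = 1 - k * C" .
    moreover have "k * (N * C) = C - k * C" using k1 by (simp add: algebra_simps) (metis mult.assoc mult.commute mult.left_neutral k1 distrib_left add.commute)
    ultimately show ?thesis by simp
  qed
  finally show ?thesis using assms(2) by (simp add: power2_eq_square)
qed

lemma sig_Bf:
  assumes D: "1 + u\<bullet>u - v\<bullet>v > 0"
  shows "has_signature (Bf u v) 8 8"
proof -
  define a where "a = omult u (oconj v)"
  define k where "k = 1 / (1 + u\<bullet>u)"
  define f where "f = (\<lambda>\<xi>. (\<xi>, k *\<^sub>R omult (oconj a) \<xi>))"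
  define g where "g = (\<lambda>\<eta>::oct. (0::oct, \<eta>))"
  have Np: "1 + u\<bullet>u > 0" by (simp add: add_pos_nonneg)
  have Dn: "(1 + u\<bullet>u - v\<bullet>v)^2 > 0" using D by simp
  have aa: "a \<bullet> a = (u\<bullet>u) * (v\<bullet>v)" by (simp add: a_def norm_mult)
  have lf: "linear f" unfolding f_def
    by (rule linearI) (simp_all add: omult_add2 omult_scale2 algebra_simps)
  have lg: "linear g" unfolding g_def by (rule linearI) simp_all
  have "inj f" unfolding f_def inj_on_def by simp
  then have dP: "dim (range f) = 8" using dim_range_inj[OF lf] by simp
  have "inj g" unfolding g_def inj_on_def by simp
  then have dT: "dim (range g) = 8" using dim_range_inj[OF lg] by simp
  have sP: "subspace (range f)" using lf by (simp add: linear_subspace_image)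
  have sT: "subspace (range g)" using lg by (simp add: linear_subspace_image)
  have Qf: "Bf u v (f \<xi>) (f \<xi>) = (\<xi> \<bullet> \<xi>) * k / (1 + u\<bullet>u - v\<bullet>v)" for \<xi>
  proof -
    have n1: "omult (oconj a) \<xi> \<bullet> omult (oconj a) \<xi> = (a\<bullet>a) * (\<xi>\<bullet>\<xi>)" by (simp add: norm_mult)
    have n2: "omult a (omult (oconj a) \<xi>) = (a\<bullet>a) *\<^sub>R \<xi>" by (rule altL)
    have "Bf u v (f \<xi>) (f \<xi>) = ((1 - v\<bullet>v) * (\<xi>\<bullet>\<xi>) - (1 + u\<bullet>u) * (k*k*(a\<bullet>a) * (\<xi>\<bullet>\<xi>))
       + 2 * (k * (a\<bullet>a) * (\<xi>\<bullet>\<xi>))) / (1 + u\<bullet>u - v\<bullet>v)^2"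
      by (simp add: Bf_def f_def a_def[symmetric] omult_scale2 n1 n2)
    also have "\<dots> = (\<xi> \<bullet> \<xi>) * k / (1 + u\<bullet>u - v\<bullet>v)"
      unfolding aa by (rule real_aux1[OF Np D k_def])
    finally show ?thesis .
  qed
  have Qg: "Bf u v (g \<eta>) (g \<eta>) = - ((1 + u\<bullet>u) * (\<eta> \<bullet> \<eta>) / (1 + u\<bullet>u - v\<bullet>v)^2)" for \<eta>
    by (simp add: Bf_def g_def omult_zero2)
  have kp: "k > 0" using Np by (simp add: k_def)
  have posf: "Bf u v x x > 0" if "x \<in> range f" "x \<noteq> 0" for x
  proof -
    obtain \<xi> where x: "x = f \<xi>" using \<open>x \<in> range f\<close> by blast
    then have "\<xi> \<noteq> 0" using that(2) linear_0[OF lf] by auto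
    then show ?thesis using x Qf kp D by simp
  qed
  have nnf: "\<not> Bf u v x x < 0" if "x \<in> range f" for x
  proof -
    obtain \<xi> where x: "x = f \<xi>" using \<open>x \<in> range f\<close> by blast
    then show ?thesis using x Qf kp D by (simp add: not_less)
  qed
  have negg: "Bf u v x x < 0" if "x \<in> range g" "x \<noteq> 0" for x
  proof -
    obtain \<eta> where x: "x = g \<eta>" using \<open>x \<in> range g\<close> by blast
    then have "\<eta> \<noteq> 0" using that(2) linear_0[OF lg] by auto
    then have "(1 + u\<bullet>u) * (\<eta> \<bullet> \<eta>) > 0" using Np by simp
    then have "(1 + u\<bullet>u) * (\<eta> \<bullet> \<eta>) / (1 + u\<bullet>u - v\<bullet>v)^2 > 0" using Dn by (rule divide_pos_pos)
    then show ?thesis by (simp add: x Qg)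
  qed
  have npg: "\<not> Bf u v x x > 0" if "x \<in> range g" for x
  proof -
    obtain \<eta> where x: "x = g \<eta>" using \<open>x \<in> range g\<close> by blast
    have "(1 + u\<bullet>u) * (\<eta> \<bullet> \<eta>) \<ge> 0" using Np by simp
    then have "(1 + u\<bullet>u) * (\<eta> \<bullet> \<eta>) / (1 + u\<bullet>u - v\<bullet>v)^2 \<ge> 0" using Dn by (rule divide_nonneg_pos)
    moreover have "Bf u v x x = - ((1 + u\<bullet>u) * (\<eta> \<bullet> \<eta>) / (1 + u\<bullet>u - v\<bullet>v)^2)" by (simp add: x Qg)
    ultimately show ?thesis by linarith
  qed
  have h1: "\<forall>x\<in>range f. x \<noteq> 0 \<longrightarrow> Bf u v x x > 0" using posf by blast
  have h2: "\<forall>x\<in>range g. \<not> Bf u v x x > 0" using npg by blast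
  have h3: "dim (range g) + 8 = DIM(oct\<times>oct)" using dT by simp
  have h4: "\<forall>x\<in>range g. x \<noteq> 0 \<longrightarrow> Bf u v x x < 0" using negg by blast
  have h5: "\<forall>x\<in>range f. \<not> Bf u v x x < 0" using nnf by blast
  have h6: "dim (range f) + 8 = DIM(oct\<times>oct)" using dP by simp
  have "pos_index (Bf u v) = 8" unfolding pos_index_def
    by (rule index_max[OF sP dP h1 sT h2 h3])
  moreover have "neg_index (Bf u v) = 8" unfolding neg_index_def
    by (rule index_max[OF sT dT h4 sP h5 h6])
  ultimately show ?thesis by (simp add: has_signature_def)
qed



lemma oinv_eq: "oinv x = inverse (x \<bullet> x) *\<^sub>R oconj x"
  by (simp add: oinv_def onorm2_eq divide_inverse)

lemma bl_oconj: "bounded_linear oconj"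
  using linear_oconj linear_conv_bounded_linear by blast

lemma oinv_deriv:
  assumes u: "u \<noteq> 0"
  shows "(oinv has_derivative (\<lambda>h. - ((1 / (u \<bullet> u))^2) *\<^sub>R omult (omult (oconj u) h) (oconj u))) (at u)"
proof -
  have N: "u \<bullet> u \<noteq> 0" using u by simp
  have d1: "((\<lambda>x. inverse (x \<bullet> x)) has_derivative
       (\<lambda>h. - (inverse (u \<bullet> u) * (u \<bullet> h + h \<bullet> u) * inverse (u \<bullet> u)))) (at u)"
    by (rule Deriv.has_derivative_inverse[OF N has_derivative_inner[OF has_derivative_ident has_derivative_ident]])
  have d2: "(oconj has_derivative oconj) (at u)" by (rule bounded_linear.has_derivative[OF bl_oconj has_derivative_ident])
  have d: "((\<lambda>x. inverse (x \<bullet> x) *\<^sub>R oconj x) has_derivative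
     (\<lambda>h. inverse (u \<bullet> u) *\<^sub>R oconj h + (- (inverse (u \<bullet> u) * (u \<bullet> h + h \<bullet> u) * inverse (u \<bullet> u))) *\<^sub>R oconj u)) (at u)"
    using has_derivative_scaleR[OF d1 d2] .
  show ?thesis
  proof (rule has_derivative_eq_rhs)
    show "(oinv has_derivative (\<lambda>h. inverse (u \<bullet> u) *\<^sub>R oconj h + (- (inverse (u \<bullet> u) * (u \<bullet> h + h \<bullet> u) * inverse (u \<bullet> u))) *\<^sub>R oconj u)) (at u)"
      using d by (simp add: oinv_eq[abs_def])
    show "(\<lambda>h. inverse (u \<bullet> u) *\<^sub>R oconj h + (- (inverse (u \<bullet> u) * (u \<bullet> h + h \<bullet> u) * inverse (u \<bullet> u))) *\<^sub>R oconj u)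
      = (\<lambda>h. - ((1 / (u \<bullet> u))^2) *\<^sub>R omult (omult (oconj u) h) (oconj u))"
    proof
      fix h
      show "inverse (u \<bullet> u) *\<^sub>R oconj h + (- (inverse (u \<bullet> u) * (u \<bullet> h + h \<bullet> u) * inverse (u \<bullet> u))) *\<^sub>R oconj u
        = - ((1 / (u \<bullet> u))^2) *\<^sub>R omult (omult (oconj u) h) (oconj u)"
        unfolding sandwich using N
        by (simp add: inner_commute scaleR_diff_right field_simps power2_eq_square)
    qed
  qed
qed

definition Dtr :: "oct \<Rightarrow> oct \<Rightarrow> oct \<times> oct \<Rightarrow> oct \<times> oct" where
  "Dtr u v w = (let xi' = - ((1 / (u \<bullet> u))^2) *\<^sub>R omult (omult (oconj u) (fst w)) (oconj u)
               in (xi', omult v xi' + omult (snd w) (oinv u)))"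

lemma transition_deriv:
  assumes u: "u \<noteq> 0"
  shows "(transition has_derivative Dtr u v) (at (u,v))"
proof -
  have tr: "transition = (\<lambda>p. (oinv (fst p), omult (snd p) (oinv (fst p))))"
    by (auto simp: transition_def split: prod.splits)
  have f1: "((\<lambda>p. oinv (fst p)) has_derivative
      (\<lambda>w. - ((1 / (u \<bullet> u))^2) *\<^sub>R omult (omult (oconj u) (fst w)) (oconj u))) (at (u,v))"
  proof -
    have o: "(oinv has_derivative (\<lambda>h. - ((1 / (u \<bullet> u))^2) *\<^sub>R omult (omult (oconj u) h) (oconj u))) (at (fst (u,v)))"
      using oinv_deriv[OF u] by simp
    have fd: "(fst has_derivative fst) (at (u,v))"
      using has_derivative_fst[OF has_derivative_ident[of "at (u,v)"]] by simp
    show ?thesis using has_derivative_compose[OF fd o] by simp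
  qed
  have f2: "((\<lambda>p. snd p) has_derivative (\<lambda>w. snd w)) (at (u,v))"
    using has_derivative_snd[OF has_derivative_ident] by blast
  have f3: "((\<lambda>p. omult (snd p) (oinv (fst p))) has_derivative
     (\<lambda>w. omult v (- ((1 / (u \<bullet> u))^2) *\<^sub>R omult (omult (oconj u) (fst w)) (oconj u)) + omult (snd w) (oinv u))) (at (u,v))"
    using bounded_bilinear.FDERIV[OF bb_omult f2 f1] by simp
  show ?thesis unfolding tr Dtr_def Let_def
    using has_derivative_Pair[OF f1 f3] by simp
qed



lemma key_id: "omult \<eta> (oconj u) \<bullet> omult v (omult (omult (oconj u) \<xi>) (oconj u))
   = (u \<bullet> u) * (omult (omult u (oconj v)) \<eta> \<bullet> \<xi>)"
proof -
  define z where "z = omult (oconj v) (omult \<eta> (oconj u))"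
  have "omult \<eta> (oconj u) \<bullet> omult v (omult (omult (oconj u) \<xi>) (oconj u))
      = omult (omult (oconj u) \<xi>) (oconj u) \<bullet> z"
    unfolding z_def by (simp add: inner_commute adjL)
  also have "\<dots> = omult (oconj u) \<xi> \<bullet> omult z u" by (simp add: adjR)
  also have "\<dots> = \<xi> \<bullet> omult u (omult z u)" by (simp add: adjL)
  also have "omult u (omult z u) = omult (omult u (oconj v)) (omult (omult \<eta> (oconj u)) u)"
    unfolding z_def flex moufang ..
  also have "omult (omult \<eta> (oconj u)) u = (u \<bullet> u) *\<^sub>R \<eta>" by (rule altR)
  finally show ?thesis by (simp add: omult_scale2 inner_commute)
qed

lemma real_aux2:
  fixes N C A B Y c :: real
  assumes N: "N > 0" and D: "1 + N - C > 0" and c: "c = 1 / N"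
  shows "((1 - c^2 * (C * N)) * (c^4 * (N^2 * A)) - (1 + c^2 * N) * (C * (c^4 * (N^2 * A)) + 2 * (- (c^3 * N * Y)) + c^2 * (B * N))
          + 2 * (c^2 * N * (C * (c^4 * (N^2 * A)) + (- (c^3 * N * Y))))) / (1 + c^2 * N - c^2 * (C * N))^2
       = ((1 - C) * A - (1 + N) * B + 2 * Y) / (1 + N - C)^2"
proof -
  have cN: "c * N = 1" using N c by simp
  have e1: "(1 - c^2 * (C * N)) * (c^4 * (N^2 * A)) - (1 + c^2 * N) * (C * (c^4 * (N^2 * A)) + 2 * (- (c^3 * N * Y)) + c^2 * (B * N))
          + 2 * (c^2 * N * (C * (c^4 * (N^2 * A)) + (- (c^3 * N * Y)))) = c^2 * ((1 - C) * A - (1 + N) * B + 2 * Y)"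
    using cN by algebra
  have e2: "1 + c^2 * N - c^2 * (C * N) = c * (1 + N - C)" using cN by algebra
  have c0: "c \<noteq> 0" using cN by auto
  show ?thesis unfolding e1 e2 using c0 by (simp add: power_mult_distrib)
qed


lemma transition_eq: "transition (u,v) = ((1 / (u \<bullet> u)) *\<^sub>R oconj u, (1 / (u \<bullet> u)) *\<^sub>R omult v (oconj u))"
  by (simp add: transition_def oinv_def onorm2_eq omult_scale2)

lemma transition_dom:
  assumes u: "u \<noteq> 0" and D: "1 + u\<bullet>u - v\<bullet>v > 0"
  shows "1 + fst (transition (u,v)) \<bullet> fst (transition (u,v)) - snd (transition (u,v)) \<bullet> snd (transition (u,v)) > 0"
proof -
  define c where "c = 1 / (u \<bullet> u)"
  have N: "u \<bullet> u > 0" using u by simp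
  have cN: "c * (u \<bullet> u) = 1" using N by (simp add: c_def)
  have "1 + fst (transition (u,v)) \<bullet> fst (transition (u,v)) - snd (transition (u,v)) \<bullet> snd (transition (u,v))
      = 1 + c^2 * (u\<bullet>u) - c^2 * ((v\<bullet>v) * (u\<bullet>u))"
    by (simp add: transition_eq c_def[symmetric] norm_mult power2_eq_square)
  also have "\<dots> = c * (1 + u\<bullet>u - v\<bullet>v)" using cN by algebra
  also have "\<dots> > 0" using N D by (simp add: c_def)
  finally show ?thesis .
qed

lemma transition_isom:
  assumes u: "u \<noteq> 0" and D: "1 + u\<bullet>u - v\<bullet>v > 0"
  shows "ds2 (transition (u,v)) (Dtr u v w) = ds2 (u,v) w"
proof -
  obtain \<xi> \<eta> where w: "w = (\<xi>, \<eta>)" by (cases w)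
  define c where "c = 1 / (u \<bullet> u)"
  define N where "N = u \<bullet> u"
  define S where "S = omult (omult (oconj u) \<xi>) (oconj u)"
  define xi' where "xi' = - (c^2) *\<^sub>R S"
  define M where "M = omult v xi'"
  define P where "P = c *\<^sub>R omult \<eta> (oconj u)"
  define Y where "Y = omult (omult u (oconj v)) \<eta> \<bullet> \<xi>"
  have Np: "N > 0" using u by (simp add: N_def)
  have Dtr: "Dtr u v w = (xi', M + P)"
    by (simp add: Dtr_def w xi'_def S_def c_def M_def P_def oinv_def onorm2_eq omult_scale2 Let_def)
  have tr: "transition (u,v) = (c *\<^sub>R oconj u, c *\<^sub>R omult v (oconj u))"
    by (simp add: transition_eq c_def)
  have UU: "(c *\<^sub>R oconj u) \<bullet> (c *\<^sub>R oconj u) = c^2 * N" by (simp add: N_def power2_eq_square)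
  have VV: "(c *\<^sub>R omult v (oconj u)) \<bullet> (c *\<^sub>R omult v (oconj u)) = c^2 * ((v\<bullet>v) * N)"
    by (simp add: N_def norm_mult power2_eq_square)
  have SS: "S \<bullet> S = N^2 * (\<xi> \<bullet> \<xi>)" by (simp add: S_def norm_mult N_def power2_eq_square)
  have XX: "xi' \<bullet> xi' = c^4 * (N^2 * (\<xi> \<bullet> \<xi>))"
    by (simp add: xi'_def SS power2_eq_square power4_eq_xxxx)
  have UV: "omult (c *\<^sub>R oconj u) (oconj (c *\<^sub>R omult v (oconj u))) = (c^2 * N) *\<^sub>R oconj v"
  proof -
    have "oconj (c *\<^sub>R omult v (oconj u)) = c *\<^sub>R omult u (oconj v)" by (simp add: oconj_scale oconj_mult)
    moreover have "omult (oconj u) (omult u (oconj v)) = N *\<^sub>R oconj v"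
      using altL[of "oconj u" "oconj v"] by (simp add: N_def)
    ultimately show ?thesis by (simp add: omult_scale1 omult_scale2 power2_eq_square)
  qed
  have MM: "M \<bullet> M = (v \<bullet> v) * (xi' \<bullet> xi')" by (simp add: M_def norm_mult)
  have PP: "P \<bullet> P = c^2 * ((\<eta> \<bullet> \<eta>) * N)" by (simp add: P_def norm_mult N_def power2_eq_square)
  have PM: "P \<bullet> M = - (c^3 * N * Y)"
    using key_id[of \<eta> u v \<xi>] by (simp add: P_def M_def xi'_def S_def omult_scale2 omult_uminus2 Y_def N_def power3_eq_cube power2_eq_square)
  have R: "omult ((c^2 * N) *\<^sub>R oconj v) (M + P) \<bullet> xi' = c^2 * N * (M \<bullet> M + P \<bullet> M)"
  proof -
    have "omult (oconj v) (M + P) \<bullet> xi' = (M + P) \<bullet> M" by (simp add: adjL M_def)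
    then show ?thesis by (simp add: omult_scale1 inner_add_left)
  qed
  have EE: "(M + P) \<bullet> (M + P) = M \<bullet> M + 2 * (P \<bullet> M) + P \<bullet> P"
    by (simp add: inner_add_left inner_add_right inner_commute)
  have "ds2 (transition (u,v)) (Dtr u v w) =
     ((1 - c^2 * ((v\<bullet>v) * N)) * (c^4 * (N^2 * (\<xi> \<bullet> \<xi>))) - (1 + c^2 * N) * ((v\<bullet>v) * (c^4 * (N^2 * (\<xi> \<bullet> \<xi>))) + 2 * (- (c^3 * N * Y)) + c^2 * ((\<eta> \<bullet> \<eta>) * N))
          + 2 * (c^2 * N * ((v\<bullet>v) * (c^4 * (N^2 * (\<xi> \<bullet> \<xi>))) + (- (c^3 * N * Y))))) / (1 + c^2 * N - c^2 * ((v\<bullet>v) * N))^2"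
    unfolding tr Dtr ds2_eq UU VV UV R EE MM XX PP PM by simp
  also have "\<dots> = ((1 - v\<bullet>v) * (\<xi>\<bullet>\<xi>) - (1 + N) * (\<eta>\<bullet>\<eta>) + 2 * Y) / (1 + N - v\<bullet>v)^2"
    by (rule real_aux2[OF Np _ ]) (use D c_def N_def in auto)
  also have "\<dots> = ds2 (u,v) w" by (simp add: w ds2_eq N_def Y_def)
  finally show ?thesis .
qed



lemma Bf_sym: "Bf u v x y = Bf u v y x"
  by (simp add: Bf_def inner_commute algebra_simps)

lemma in_chart_dom: "(u,v) \<in> chart_dom \<longleftrightarrow> 1 + u\<bullet>u - v\<bullet>v > 0"
  by (simp add: chart_dom_def onorm2_eq)

theorem proposition7p2:
  shows "(\<forall>p\<in>chart_dom.
            bilinear (metric_form p)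
          \<and> (\<forall>x y. metric_form p x y = metric_form p y x)
          \<and> (\<forall>w. metric_form p w w = ds2 p w)
          \<and> nondegenerate (metric_form p)
          \<and> has_signature (metric_form p) 8 8)
       \<and> (\<forall>p\<in>chart_dom. fst p \<noteq> 0 \<longrightarrow>
            transition p \<in> chart_dom
          \<and> (\<exists>D. (transition has_derivative D) (at p)
                 \<and> (\<forall>w. ds2 (transition p) (D w) = ds2 p w)))"
proof (intro conjI ballI impI)
  fix p assume p: "p \<in> chart_dom"
  obtain u v where pe: "p = (u,v)" by (cases p)
  have D: "1 + u\<bullet>u - v\<bullet>v > 0" using p pe in_chart_dom by simp
  have mf: "metric_form p = Bf u v" unfolding pe by (intro ext) (rule mf_Bf)
  show "bilinear (metric_form p)" unfolding mf by (rule bilinear_Bf)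
  show "\<forall>x y. metric_form p x y = metric_form p y x" unfolding mf using Bf_sym by blast
  show "\<forall>w. metric_form p w w = ds2 p w"
  proof
    fix w
    have "metric_form p w w = Bf u v w w" by (simp only: mf)
    also have "\<dots> = ds2 (u,v) w" by (rule ds2_Bf[symmetric])
    finally show "metric_form p w w = ds2 p w" by (simp only: pe)
  qed
  show "nondegenerate (metric_form p)" unfolding mf by (rule nondeg_Bf[OF D])
  show "has_signature (metric_form p) 8 8" unfolding mf by (rule sig_Bf[OF D])
next
  fix p assume p: "p \<in> chart_dom" and u0: "fst p \<noteq> 0"
  obtain u v where pe: "p = (u,v)" by (cases p)
  have D: "1 + u\<bullet>u - v\<bullet>v > 0" using p pe in_chart_dom by simp
  have u: "u \<noteq> 0" using u0 pe by simp
  show "transition p \<in> chart_dom"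
  proof -
    obtain a b where ab: "transition (u,v) = (a,b)" by (cases "transition (u,v)")
    show ?thesis using transition_dom[OF u D] unfolding pe ab by (simp add: in_chart_dom)
  qed
  show "\<exists>D. (transition has_derivative D) (at p) \<and> (\<forall>w. ds2 (transition p) (D w) = ds2 p w)"
    unfolding pe using transition_deriv[OF u] transition_isom[OF u D] by blast
qed

end
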